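(* Let $\mathsf{UnivT},\mathsf{StrongT},\mathsf{LexT},\mathsf{WeakT}$ denote the classes of universally truthful, strongly truthful, lex-truthful and weakly truthful randomized mechanisms, respectively. Then in every ordinal setting $\mathsf{UnivT}\subseteq\mathsf{StrongT}\subseteq\mathsf{LexT}\subseteq\mathsf{WeakT}$, and each of these inclusions is strict: for each inclusion there exists an ordinal setting (in which every agent may report any strict total order on the outcomes) and a mechanism belonging to the larger class but not the smaller one.
   Context: An ordinal setting: a set $N$ of $n$ agents, a finite set $O$ of $m$ outcomes, and for each agent $j$ a set $\Sigma_j$ of allowed strict total orders on $O$; $\Sigma=\prod_j\Sigma_j$. For a strict order $\succ$, $\succ(\ell)$ denotes its $\ell$-th ranked outcome. A deterministic mechanism (social choice function) $f:\Sigma\to O$ is truthful if $f(\succ_j,\succ_{-j})\succeq_j f(\succ'_j,\succ_{-j})$ for all $j$, all $\succ_j,\succ'_j\in\Sigma_j$, all $\succ_{-j}$ (where $a\succeq_j b$ means $a\succ_j b$ or $a=b$). A randomized mechanism maps each profile to a probability distribution (lottery) over $O$. It is universally truthful if it is a mixture of deterministic truthful mechanisms with input-independent mixture weights. For a strict order $\succ$ and lotteries $p,q$: $p$ stochastically dominates $q$ w.r.t. $\succ$ if $\sum_{\ell\le i}p(\succ(\ell))\ge\sum_{\ell\le i}q(\succ(\ell))$ for all $i\in[m]$; for $p\ne q$, $p$ lexicographically dominates $q$ w.r.t. $\succ$ if there is $i\in[m]$ with $p(\succ(i))>q(\succ(i))$ and $p(\succ(\ell))=q(\succ(\ell))$ for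 all $\ell<i$. A randomized mechanism $\mathcal{M}$ is strongly truthful if $\mathcal{M}(\succ_j,\succ_{-j})$ stochastically dominates $\mathcal{M}(\succ'_j,\succ_{-j})$ w.r.t. $\succ_j$ for all $j,\succ_j,\succ'_j,\succ_{-j}$; weakly truthful if $\mathcal{M}(\succ_j,\succ_{-j})$ is not stochastically dominated by $\mathcal{M}(\succ'_j,\succ_{-j})$ w.r.t. $\succ_j$ for all such data; lex-truthful if for all such data either $\mathcal{M}(\succ_j,\succ_{-j})=\mathcal{M}(\succ'_j,\succ_{-j})$ or $\mathcal{M}(\succ_j,\succ_{-j})$ lexicographically dominates $\mathcal{M}(\succ'_j,\succ_{-j})$ w.r.t. $\succ_j$. *)

theory Defs
  imports "HOL-Probability.Probability_Mass_Function" "HOL-Library.FuncSet"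
begin

text \<open>A strict total order on the finite outcome set Out is represented by its ranking list:
  a duplicate-free list enumerating Out, best outcome first. The l-th ranked outcome
  (1-based) is xs ! (l - 1).\<close>

definition strict_orders :: "'o set \<Rightarrow> 'o list set" where
  "strict_orders Out = {xs. distinct xs \<and> set xs = Out}"

definition prefers :: "'o list \<Rightarrow> 'o \<Rightarrow> 'o \<Rightarrow> bool" where
  "prefers xs a b \<longleftrightarrow> (\<exists>i k. i < k \<and> k < length xs \<and> xs ! i = a \<and> xs ! k = b)"

definition weakly_prefers :: "'o list \<Rightarrow> 'o \<Rightarrow> 'o \<Rightarrow> bool" where
  "weakly_prefers xs a b \<longleftrightarrow> prefers xs a b \<or> a = b"

definition ordinal_setting :: "'a set \<Rightarrow> 'o set \<Rightarrow> ('a \<Rightarrow> 'o list set) \<Rightarrow> bool" where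
  "ordinal_setting N Out Sig \<longleftrightarrow> finite N \<and> finite Out \<and> (\<forall>j\<in>N. Sig j \<subseteq> strict_orders Out)"

definition profiles :: "'a set \<Rightarrow> ('a \<Rightarrow> 'o list set) \<Rightarrow> ('a \<Rightarrow> 'o list) set" where
  "profiles N Sig = PiE N Sig"

definition det_mechanism ::
  "'a set \<Rightarrow> 'o set \<Rightarrow> ('a \<Rightarrow> 'o list set) \<Rightarrow> (('a \<Rightarrow> 'o list) \<Rightarrow> 'o) \<Rightarrow> bool" where
  "det_mechanism N Out Sig f \<longleftrightarrow> (\<forall>P\<in>profiles N Sig. f P \<in> Out)"

definition det_truthful ::
  "'a set \<Rightarrow> 'o set \<Rightarrow> ('a \<Rightarrow> 'o list set) \<Rightarrow> (('a \<Rightarrow> 'o list) \<Rightarrow> 'o) \<Rightarrow> bool" where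
  "det_truthful N Out Sig f \<longleftrightarrow> det_mechanism N Out Sig f \<and>
     (\<forall>P\<in>profiles N Sig. \<forall>j\<in>N. \<forall>s'\<in>Sig j.
        weakly_prefers (P j) (f P) (f (P(j := s'))))"

definition rand_mechanism ::
  "'a set \<Rightarrow> 'o set \<Rightarrow> ('a \<Rightarrow> 'o list set) \<Rightarrow> (('a \<Rightarrow> 'o list) \<Rightarrow> 'o pmf) \<Rightarrow> bool" where
  "rand_mechanism N Out Sig M \<longleftrightarrow> (\<forall>P\<in>profiles N Sig. set_pmf (M P) \<subseteq> Out)"

definition stoch_dom :: "'o list \<Rightarrow> 'o pmf \<Rightarrow> 'o pmf \<Rightarrow> bool" where
  "stoch_dom xs p q \<longleftrightarrow>
     (\<forall>i\<in>{1..length xs}. (\<Sum>l<i. pmf p (xs ! l)) \<ge> (\<Sum>l<i. pmf q (xs ! l)))"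

definition lex_dom :: "'o list \<Rightarrow> 'o pmf \<Rightarrow> 'o pmf \<Rightarrow> bool" where
  "lex_dom xs p q \<longleftrightarrow> p \<noteq> q \<and>
     (\<exists>i<length xs. pmf p (xs ! i) > pmf q (xs ! i) \<and>
        (\<forall>l<i. pmf p (xs ! l) = pmf q (xs ! l)))"

definition UnivT :: "'a set \<Rightarrow> 'o set \<Rightarrow> ('a \<Rightarrow> 'o list set) \<Rightarrow> (('a \<Rightarrow> 'o list) \<Rightarrow> 'o pmf) set" where
  "UnivT N Out Sig = {M. rand_mechanism N Out Sig M \<and>
     (\<exists>D :: (('a \<Rightarrow> 'o list) \<Rightarrow> 'o) pmf.
        (\<forall>f\<in>set_pmf D. det_truthful N Out Sig f) \<and>
        (\<forall>P\<in>profiles N Sig. M P = map_pmf (\<lambda>f. f P) D))}"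

definition StrongT :: "'a set \<Rightarrow> 'o set \<Rightarrow> ('a \<Rightarrow> 'o list set) \<Rightarrow> (('a \<Rightarrow> 'o list) \<Rightarrow> 'o pmf) set" where
  "StrongT N Out Sig = {M. rand_mechanism N Out Sig M \<and>
     (\<forall>P\<in>profiles N Sig. \<forall>j\<in>N. \<forall>s'\<in>Sig j.
        stoch_dom (P j) (M P) (M (P(j := s'))))}"

definition LexT :: "'a set \<Rightarrow> 'o set \<Rightarrow> ('a \<Rightarrow> 'o list set) \<Rightarrow> (('a \<Rightarrow> 'o list) \<Rightarrow> 'o pmf) set" where
  "LexT N Out Sig = {M. rand_mechanism N Out Sig M \<and>
     (\<forall>P\<in>profiles N Sig. \<forall>j\<in>N. \<forall>s'\<in>Sig j.
        M P = M (P(j := s')) \<or> lex_dom (P j) (M P) (M (P(j := s'))))}"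

text \<open>Weak truthfulness: the truthful lottery is not (strictly, i.e. by a different lottery)
  stochastically dominated by a misreport's lottery.\<close>
definition WeakT :: "'a set \<Rightarrow> 'o set \<Rightarrow> ('a \<Rightarrow> 'o list set) \<Rightarrow> (('a \<Rightarrow> 'o list) \<Rightarrow> 'o pmf) set" where
  "WeakT N Out Sig = {M. rand_mechanism N Out Sig M \<and>
     (\<forall>P\<in>profiles N Sig. \<forall>j\<in>N. \<forall>s'\<in>Sig j.
        \<not> (M (P(j := s')) \<noteq> M P \<and> stoch_dom (P j) (M (P(j := s'))) (M P)))}"

end

theory Submission
  imports Defs
begin

lemma sum_prefix:
  assumes "distinct xs" "i \<le> length xs"
  shows "(\<Sum>l<i. pmf p (xs ! l)) = measure_pmf.prob p ((!) xs ` {..<i})"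
proof -
  have inj: "inj_on ((!) xs) {..<i}" using assms by (intro inj_on_nth) auto
  have "measure_pmf.prob p ((!) xs ` {..<i}) = sum (pmf p) ((!) xs ` {..<i})"
    by (rule measure_measure_pmf_finite) auto
  also have "\<dots> = (\<Sum>l<i. pmf p (xs ! l))" using sum.reindex[OF inj] by simp
  finally show ?thesis by simp
qed

lemma prof_upd: "P \<in> profiles N Sig \<Longrightarrow> j \<in> N \<Longrightarrow> s' \<in> Sig j \<Longrightarrow> P(j := s') \<in> profiles N Sig"
  unfolding profiles_def by (auto simp: PiE_iff extensional_def)

lemma order_of:
  assumes "ordinal_setting N Out Sig" "P \<in> profiles N Sig" "j \<in> N"
  shows "distinct (P j)" "set (P j) = Out"
  using assms unfolding ordinal_setting_def profiles_def strict_orders_def by (auto simp: PiE_iff)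

lemma univ_strong: "ordinal_setting N Out Sig \<Longrightarrow> UnivT N Out Sig \<subseteq> StrongT N Out Sig"
proof
  fix M assume os: "ordinal_setting N Out Sig" and "M \<in> UnivT N Out Sig"
  then obtain D where rm: "rand_mechanism N Out Sig M" and D: "\<forall>f\<in>set_pmf D. det_truthful N Out Sig f"
    "\<forall>P\<in>profiles N Sig. M P = map_pmf (\<lambda>f. f P) D" unfolding UnivT_def by auto
  show "M \<in> StrongT N Out Sig" unfolding StrongT_def
  proof (intro CollectI conjI rm ballI)
    fix P j s' assume P: "P \<in> profiles N Sig" and j: "j \<in> N" and s': "s' \<in> Sig j"
    define P' where "P' = P(j := s')"
    have P': "P' \<in> profiles N Sig" using prof_upd[OF P j s'] P'_def by simp
    define xs where "xs = P j"
    have dist: "distinct xs" and setxs: "set xs = Out" using order_of[OF os P j] xs_def by auto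
    show "stoch_dom (P j) (M P) (M (P(j := s')))" unfolding stoch_dom_def P'_def[symmetric] xs_def[symmetric]
    proof
      fix i assume "i \<in> {1..length xs}"
      hence il: "i \<le> length xs" by simp
      define A where "A = (!) xs ` {..<i}"
      have sub: "{f. f P' \<in> A} \<inter> set_pmf D \<subseteq> {f. f P \<in> A} \<inter> set_pmf D"
      proof
        fix f assume f: "f \<in> {f. f P' \<in> A} \<inter> set_pmf D"
        then obtain k where k: "k < i" "f P' = xs ! k" unfolding A_def by auto
        have tr: "weakly_prefers xs (f P) (f P')" using D(1) f P j s' unfolding det_truthful_def xs_def P'_def by blast
        show "f \<in> {f. f P \<in> A} \<inter> set_pmf D"
        proof (cases "f P = f P'")
          case True thus ?thesis using f by auto
        next
          case False
          then obtain i' k' where ik: "i' < k'" "k' < length xs" "xs ! i' = f P" "xs ! k' = f P'"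
            using tr unfolding weakly_prefers_def prefers_def by auto
          have "k' = k" using ik k il dist nth_eq_iff_index_eq by fastforce
          thus ?thesis using ik k f unfolding A_def by (auto intro!: image_eqI[of _ _ i'])
        qed
      qed
      have "measure_pmf.prob D ({f. f P' \<in> A} \<inter> set_pmf D) \<le> measure_pmf.prob D ({f. f P \<in> A} \<inter> set_pmf D)"
        by (rule measure_pmf.finite_measure_mono[OF sub]) simp
      hence "measure_pmf.prob D ({f. f P' \<in> A}) \<le> measure_pmf.prob D ({f. f P \<in> A})"
        by (simp add: measure_Int_set_pmf)
      thus "(\<Sum>l<i. pmf (M P') (xs ! l)) \<le> (\<Sum>l<i. pmf (M P) (xs ! l))"
        unfolding sum_prefix[OF dist il] A_def[symmetric] using D(2) P P' by (simp add: vimage_def)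
    qed
  qed
qed

lemma strong_lex: "ordinal_setting N Out Sig \<Longrightarrow> StrongT N Out Sig \<subseteq> LexT N Out Sig"
proof
  fix M assume os: "ordinal_setting N Out Sig" and "M \<in> StrongT N Out Sig"
  hence rm: "rand_mechanism N Out Sig M" and sd: "\<forall>P\<in>profiles N Sig. \<forall>j\<in>N. \<forall>s'\<in>Sig j.
        stoch_dom (P j) (M P) (M (P(j := s')))" unfolding StrongT_def by auto
  show "M \<in> LexT N Out Sig" unfolding LexT_def
  proof (intro CollectI conjI rm ballI)
    fix P j s' assume P: "P \<in> profiles N Sig" and j: "j \<in> N" and s': "s' \<in> Sig j"
    define P' where "P' = P(j := s')"
    have P': "P' \<in> profiles N Sig" using prof_upd[OF P j s'] P'_def by simp
    define xs where "xs = P j"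
    have dist: "distinct xs" and setxs: "set xs = Out" using order_of[OF os P j] xs_def by auto
    have s1: "set_pmf (M P) \<subseteq> set xs" "set_pmf (M P') \<subseteq> set xs"
      using rm P P' setxs unfolding rand_mechanism_def by auto
    have sdx: "stoch_dom xs (M P) (M P')" using sd P j s' unfolding xs_def P'_def by blast
    show "M P = M (P(j := s')) \<or> lex_dom (P j) (M P) (M (P(j := s')))"
    proof (cases "M P = M P'")
      case False
      have "\<exists>i. i < length xs \<and> pmf (M P) (xs ! i) \<noteq> pmf (M P') (xs ! i)"
      proof (rule ccontr)
        assume "\<nexists>i. i < length xs \<and> pmf (M P) (xs ! i) \<noteq> pmf (M P') (xs ! i)"
        hence "M P = M P'"
        proof (intro pmf_eqI)
          fix x assume h: "\<nexists>i. i < length xs \<and> pmf (M P) (xs ! i) \<noteq> pmf (M P') (xs ! i)"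
          show "pmf (M P) x = pmf (M P') x"
          proof (cases "x \<in> set xs")
            case True then obtain i where "i < length xs" "x = xs ! i" by (auto simp: in_set_conv_nth)
            thus ?thesis using h by auto
          next
            case False thus ?thesis using s1 by (metis pmf_eq_0_set_pmf subsetD)
          qed
        qed
        thus False using False by simp
      qed
      then obtain i where i: "i < length xs \<and> pmf (M P) (xs ! i) \<noteq> pmf (M P') (xs ! i)"
        and least: "\<And>l. l < i \<Longrightarrow> \<not> (l < length xs \<and> pmf (M P) (xs ! l) \<noteq> pmf (M P') (xs ! l))"
        using exists_least_iff[of "\<lambda>i. i < length xs \<and> pmf (M P) (xs ! i) \<noteq> pmf (M P') (xs ! i)"] by metis
      have eq: "\<forall>l<i. pmf (M P) (xs ! l) = pmf (M P') (xs ! l)" using least i by auto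
      have "Suc i \<in> {1..length xs}" using i by auto
      hence "(\<Sum>l<Suc i. pmf (M P') (xs ! l)) \<le> (\<Sum>l<Suc i. pmf (M P) (xs ! l))"
        using sdx unfolding stoch_dom_def by blast
      moreover have "(\<Sum>l<i. pmf (M P') (xs ! l)) = (\<Sum>l<i. pmf (M P) (xs ! l))"
        using eq by (intro sum.cong) auto
      ultimately have "pmf (M P) (xs ! i) > pmf (M P') (xs ! i)" using i by simp
      hence "lex_dom xs (M P) (M P')" using False eq i unfolding lex_dom_def by blast
      thus ?thesis using P'_def xs_def by simp
    qed (simp add: P'_def)
  qed
qed

lemma lex_weak: "ordinal_setting N Out Sig \<Longrightarrow> LexT N Out Sig \<subseteq> WeakT N Out Sig"
proof
  fix M assume os: "ordinal_setting N Out Sig" and "M \<in> LexT N Out Sig"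
  hence rm: "rand_mechanism N Out Sig M" and lx: "\<forall>P\<in>profiles N Sig. \<forall>j\<in>N. \<forall>s'\<in>Sig j.
        M P = M (P(j := s')) \<or> lex_dom (P j) (M P) (M (P(j := s')))" unfolding LexT_def by auto
  show "M \<in> WeakT N Out Sig" unfolding WeakT_def
  proof (intro CollectI conjI rm ballI notI)
    fix P j s' assume P: "P \<in> profiles N Sig" and j: "j \<in> N" and s': "s' \<in> Sig j"
      and h: "M (P(j := s')) \<noteq> M P \<and> stoch_dom (P j) (M (P(j := s'))) (M P)"
    define P' where "P' = P(j := s')"
    define xs where "xs = P j"
    have "M P = M P' \<or> lex_dom xs (M P) (M P')" using lx P j s' unfolding xs_def P'_def by blast
    moreover have "M P' \<noteq> M P" using h unfolding P'_def by simp
    ultimately have "lex_dom xs (M P) (M P')" by auto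
    then obtain i where i: "i < length xs" "pmf (M P) (xs ! i) > pmf (M P') (xs ! i)"
      "\<forall>l<i. pmf (M P) (xs ! l) = pmf (M P') (xs ! l)" unfolding lex_dom_def by blast
    have sd: "stoch_dom xs (M P') (M P)" using h unfolding xs_def P'_def by simp
    have "Suc i \<in> {1..length xs}" using i by auto
    hence "(\<Sum>l<Suc i. pmf (M P') (xs ! l)) \<ge> (\<Sum>l<Suc i. pmf (M P) (xs ! l))"
      using sd unfolding stoch_dom_def by blast
    hence "(\<Sum>l<i. pmf (M P') (xs ! l)) + pmf (M P') (xs ! i) \<ge> (\<Sum>l<i. pmf (M P) (xs ! l)) + pmf (M P) (xs ! i)"
      by simp
    moreover have "(\<Sum>l<i. pmf (M P') (xs ! l)) = (\<Sum>l<i. pmf (M P) (xs ! l))"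
      using i by (intro sum.cong) auto
    ultimately show False using i(2) by linarith
  qed
qed


abbreviation "S6 \<equiv> {[0,1,2],[0,2,1],[1,0,2],[1,2,0],[2,0,1],[2,1,0::nat]}"

lemma so3: "strict_orders {0,1,2::nat} = S6"
proof
  show "S6 \<subseteq> strict_orders {0,1,2}" unfolding strict_orders_def by auto
next
  show "strict_orders {0,1,2} \<subseteq> S6"
  proof
    fix xs :: "nat list" assume "xs \<in> strict_orders {0,1,2}"
    hence d: "distinct xs" and s: "set xs = {0,1,2}" unfolding strict_orders_def by auto
    have "length xs = 3" using distinct_card[OF d] s by simp
    then obtain a b c where xs: "xs = [a,b,c]" by (auto simp: length_Suc_conv numeral_3_eq_3)
    have s': "set [a,b,c] = {0,1,2}" using s xs by simp
    have "a \<in> {0,1,2}" by (subst s'[symmetric]) simp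
    moreover have "b \<in> {0,1,2}" by (subst s'[symmetric]) simp
    moreover have "c \<in> {0,1,2}" by (subst s'[symmetric]) simp
    moreover have "a \<noteq> b" "a \<noteq> c" "b \<noteq> c" using d xs by auto
    ultimately show "xs \<in> S6" unfolding xs by (simp only: insert_iff empty_iff) auto
  qed
qed

lemma stoch3: "stoch_dom [a,b,c] p q \<longleftrightarrow> pmf p a \<ge> pmf q a \<and> pmf p a + pmf p b \<ge> pmf q a + pmf q b
   \<and> pmf p a + pmf p b + pmf p c \<ge> pmf q a + pmf q b + pmf q c"
proof -
  have e: "{1..length [a,b,c]} = {1,2,3::nat}" by auto
  show ?thesis unfolding stoch_dom_def e by (simp add: eval_nat_numeral lessThan_Suc ac_simps)
qed

lemma lex3: "lex_dom [a,b,c] p q \<longleftrightarrow> pmf p a > pmf q a \<or> (pmf p a = pmf q a \<and> pmf p b > pmf q b)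
   \<or> (pmf p a = pmf q a \<and> pmf p b = pmf q b \<and> pmf p c > pmf q c)"
proof
  assume "lex_dom [a,b,c] p q"
  then obtain i where "i < length [a,b,c]" "pmf p ([a,b,c] ! i) > pmf q ([a,b,c] ! i)"
    "\<forall>l<i. pmf p ([a,b,c] ! l) = pmf q ([a,b,c] ! l)" unfolding lex_dom_def by auto
  moreover have "i = 0 \<or> i = 1 \<or> i = 2" using \<open>i < length [a,b,c]\<close> by auto
  ultimately show "pmf p a > pmf q a \<or> (pmf p a = pmf q a \<and> pmf p b > pmf q b)
   \<or> (pmf p a = pmf q a \<and> pmf p b = pmf q b \<and> pmf p c > pmf q c)"
    by (auto simp: less_Suc_eq)
next
  assume h: "pmf p a > pmf q a \<or> (pmf p a = pmf q a \<and> pmf p b > pmf q b)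
   \<or> (pmf p a = pmf q a \<and> pmf p b = pmf q b \<and> pmf p c > pmf q c)"
  hence ne: "p \<noteq> q" by auto
  from h show "lex_dom [a,b,c] p q" unfolding lex_dom_def
  proof (elim disjE)
    assume "pmf p a > pmf q a" thus "p \<noteq> q \<and> (\<exists>i<length [a,b,c]. pmf q ([a,b,c] ! i) < pmf p ([a,b,c] ! i) \<and> (\<forall>l<i. pmf p ([a,b,c] ! l) = pmf q ([a,b,c] ! l)))"
      using ne by (intro conjI exI[of _ 0]) auto
  next
    assume "pmf p a = pmf q a \<and> pmf p b > pmf q b" thus "p \<noteq> q \<and> (\<exists>i<length [a,b,c]. pmf q ([a,b,c] ! i) < pmf p ([a,b,c] ! i) \<and> (\<forall>l<i. pmf p ([a,b,c] ! l) = pmf q ([a,b,c] ! l)))"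
      using ne by (intro conjI exI[of _ 1]) auto
  next
    assume "pmf p a = pmf q a \<and> pmf p b = pmf q b \<and> pmf p c > pmf q c" thus "p \<noteq> q \<and> (\<exists>i<length [a,b,c]. pmf q ([a,b,c] ! i) < pmf p ([a,b,c] ! i) \<and> (\<forall>l<i. pmf p ([a,b,c] ! l) = pmf q ([a,b,c] ! l)))"
      using ne by (intro conjI exI[of _ 2]) (auto simp: less_Suc_eq numeral_2_eq_2)
  qed
qed

definition pr :: "nat list \<Rightarrow> nat \<Rightarrow> nat list" where "pr xs = (\<lambda>_. undefined)(0 := xs)"

lemma pr_simps[simp]: "pr xs 0 = xs" "(pr xs)(0 := ys) = pr ys" unfolding pr_def by auto

lemma prof1: "profiles {0::nat} (\<lambda>_. S) = pr ` S"
proof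
  show "profiles {0::nat} (\<lambda>_. S) \<subseteq> pr ` S"
  proof
    fix P assume "P \<in> profiles {0::nat} (\<lambda>_. S)"
    hence P: "P 0 \<in> S" "\<And>x. x \<noteq> 0 \<Longrightarrow> P x = undefined" unfolding profiles_def by (auto simp: PiE_iff extensional_def)
    have "P = pr (P 0)" unfolding pr_def using P(2) by (auto simp: fun_eq_iff)
    thus "P \<in> pr ` S" using P(1) by blast
  qed
next
  show "pr ` S \<subseteq> profiles {0::nat} (\<lambda>_. S)"
    unfolding profiles_def by (auto simp: PiE_iff extensional_def pr_def split: if_split_asm)
qed

lemma prefers3: "prefers [a,b,c] x y \<longleftrightarrow> (x=a \<and> y=b) \<or> (x=a \<and> y=c) \<or> (x=b \<and> y=c)"
proof
  assume "prefers [a,b,c] x y"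
  then obtain i k where "i<k" "k < 3" "[a,b,c]!i = x" "[a,b,c]!k = y" unfolding prefers_def by auto
  moreover have "(i=0 \<and> k=1) \<or> (i=0 \<and> k=2) \<or> (i=1 \<and> k=2)" using \<open>i<k\<close> \<open>k<3\<close> by auto
  ultimately show "(x=a \<and> y=b) \<or> (x=a \<and> y=c) \<or> (x=b \<and> y=c)" by auto
next
  assume "(x=a \<and> y=b) \<or> (x=a \<and> y=c) \<or> (x=b \<and> y=c)"
  thus "prefers [a,b,c] x y" unfolding prefers_def
  proof (elim disjE)
    assume "x = a \<and> y = b" thus "\<exists>i k. i < k \<and> k < length [a, b, c] \<and> [a, b, c] ! i = x \<and> [a, b, c] ! k = y"
      by (intro exI[of _ 0] exI[of _ 1]) auto
  next
    assume "x = a \<and> y = c" thus "\<exists>i k. i < k \<and> k < length [a, b, c] \<and> [a, b, c] ! i = x \<and> [a, b, c] ! k = y"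
      by (intro exI[of _ 0] exI[of _ 2]) auto
  next
    assume "x = b \<and> y = c" thus "\<exists>i k. i < k \<and> k < length [a, b, c] \<and> [a, b, c] ! i = x \<and> [a, b, c] ! k = y"
      by (intro exI[of _ 1] exI[of _ 2]) (auto simp: numeral_2_eq_2)
  qed
qed

definition "Out3 = {0,1,2::nat}"
definition "Sig3 = (\<lambda>_::nat. strict_orders Out3)"

lemma os3: "ordinal_setting {0} Out3 Sig3"
  unfolding ordinal_setting_def Out3_def Sig3_def by auto

lemma prof3: "profiles {0} Sig3 = pr ` S6"
  unfolding Sig3_def Out3_def so3 prof1 ..

lemma Sig3: "Sig3 j = S6" unfolding Sig3_def Out3_def so3 ..

lemma rand3: "(\<And>xs. xs \<in> S6 \<Longrightarrow> set_pmf (L xs) \<subseteq> Out3) \<Longrightarrow> rand_mechanism {0} Out3 Sig3 (\<lambda>P. L (P 0))"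
  unfolding rand_mechanism_def prof3 by auto

lemma strong3: "(\<lambda>P. L (P 0)) \<in> StrongT {0} Out3 Sig3 \<longleftrightarrow> rand_mechanism {0} Out3 Sig3 (\<lambda>P. L (P 0)) \<and>
   (\<forall>xs\<in>S6. \<forall>ys\<in>S6. stoch_dom xs (L xs) (L ys))"
  unfolding StrongT_def prof3 Sig3 by auto

lemma lexT3: "(\<lambda>P. L (P 0)) \<in> LexT {0} Out3 Sig3 \<longleftrightarrow> rand_mechanism {0} Out3 Sig3 (\<lambda>P. L (P 0)) \<and>
   (\<forall>xs\<in>S6. \<forall>ys\<in>S6. L xs = L ys \<or> lex_dom xs (L xs) (L ys))"
  unfolding LexT_def prof3 Sig3 by auto

lemma weakT3: "(\<lambda>P. L (P 0)) \<in> WeakT {0} Out3 Sig3 \<longleftrightarrow> rand_mechanism {0} Out3 Sig3 (\<lambda>P. L (P 0)) \<and>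
   (\<forall>xs\<in>S6. \<forall>ys\<in>S6. \<not> (L ys \<noteq> L xs \<and> stoch_dom xs (L ys) (L xs)))"
  unfolding WeakT_def prof3 Sig3 by auto

definition "La xs = pmf_of_set {xs!0, xs!1::nat}"
definition "Lb xs = (if xs!0 = (1::nat) then return_pmf 1 else pmf_of_set {0,2})"
definition "Lc xs = (if xs!2 = (1::nat) then pmf_of_set {0,2} else return_pmf 1)"

lemma a_rand: "rand_mechanism {0} Out3 Sig3 (\<lambda>P. La (P 0))"
  by (rule rand3) (auto simp: La_def Out3_def)
lemma b_rand: "rand_mechanism {0} Out3 Sig3 (\<lambda>P. Lb (P 0))"
  by (rule rand3) (auto simp: Lb_def Out3_def)
lemma c_rand: "rand_mechanism {0} Out3 Sig3 (\<lambda>P. Lc (P 0))"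
  by (rule rand3) (auto simp: Lc_def Out3_def)



lemma a_strong: "(\<lambda>P. La (P 0)) \<in> StrongT {0} Out3 Sig3"
  unfolding strong3 using a_rand by (simp add: stoch3 La_def)

lemma b_lex: "(\<lambda>P. Lb (P 0)) \<in> LexT {0} Out3 Sig3"
  unfolding lexT3 using b_rand by (simp add: lex3 Lb_def)

lemma b_not_strong: "(\<lambda>P. Lb (P 0)) \<notin> StrongT {0} Out3 Sig3"
  unfolding strong3 by (simp add: stoch3 Lb_def)

lemma c_weak: "(\<lambda>P. Lc (P 0)) \<in> WeakT {0} Out3 Sig3"
  unfolding weakT3 using c_rand by (simp add: stoch3 Lc_def)

lemma ret_ne: "return_pmf (1::nat) \<noteq> pmf_of_set {0,2}"
proof
  assume e: "return_pmf (1::nat) = pmf_of_set {0,2}"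
  have "pmf (return_pmf (1::nat)) 1 = pmf (pmf_of_set {0,2::nat}) 1" using e by (simp only:)
  thus False by simp
qed

lemma c_not_lex: "(\<lambda>P. Lc (P 0)) \<notin> LexT {0} Out3 Sig3"
  unfolding lexT3 using ret_ne by (simp add: lex3 Lc_def)

lemma pr_prof: "xs \<in> S6 \<Longrightarrow> pr xs \<in> profiles {0} Sig3"
  unfolding prof3 by blast

lemma a_not_univ: "(\<lambda>P. La (P 0)) \<notin> UnivT {0} Out3 Sig3"
proof
  assume "(\<lambda>P. La (P 0)) \<in> UnivT {0} Out3 Sig3"
  then obtain D where D1: "\<forall>f\<in>set_pmf D. det_truthful {0} Out3 Sig3 f"
    and D2: "\<forall>P\<in>profiles {0} Sig3. La (P 0) = map_pmf (\<lambda>f. f P) D" unfolding UnivT_def by auto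
  have tr: "weakly_prefers xs (f (pr xs)) (f (pr ys))" if "f \<in> set_pmf D" "xs \<in> S6" "ys \<in> S6" for f xs ys
  proof -
    have "det_truthful {0} Out3 Sig3 f" using D1 that(1) by blast
    hence "weakly_prefers (pr xs 0) (f (pr xs)) (f ((pr xs)(0 := ys)))"
      unfolding det_truthful_def using pr_prof[OF that(2)] that(3) Sig3 by blast
    thus ?thesis by simp
  qed
  have meas: "measure_pmf.prob D {f. f (pr xs) = y} = pmf (La xs) y" if "xs \<in> S6" for xs y
  proof -
    have "La xs = map_pmf (\<lambda>f. f (pr xs)) D" using D2 pr_prof[OF that] by (metis pr_simps(1))
    thus ?thesis by (simp add: pmf_map vimage_def)
  qed
  define C0 where "C0 = {f. f (pr [0,1,2]) = 1} \<inter> set_pmf D"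
  define C1 where "C1 = {f. f (pr [1,2,0]) = 2} \<inter> set_pmf D"
  define C2 where "C2 = {f. f (pr [2,0,1]) = 0} \<inter> set_pmf D"
  have m0: "measure_pmf.prob D C0 = 1/2" unfolding C0_def measure_Int_set_pmf
    by (subst meas) (auto simp: La_def)
  have m1: "measure_pmf.prob D C1 = 1/2" unfolding C1_def measure_Int_set_pmf
    by (subst meas) (auto simp: La_def)
  have m2: "measure_pmf.prob D C2 = 1/2" unfolding C2_def measure_Int_set_pmf
    by (subst meas) (auto simp: La_def)
  have d01: "C0 \<inter> C1 = {}"
  proof (rule ccontr)
    assume "C0 \<inter> C1 \<noteq> {}" then obtain f where f: "f \<in> C0" "f \<in> C1" by blast
    have "weakly_prefers [1,2,0] (f (pr [1,2,0])) (f (pr [0,1,2]))" using tr[of f "[1,2,0]" "[0,1,2]"] f unfolding C1_def by simp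
    thus False using f unfolding C0_def C1_def weakly_prefers_def prefers3 by simp
  qed
  have d12: "C1 \<inter> C2 = {}"
  proof (rule ccontr)
    assume "C1 \<inter> C2 \<noteq> {}" then obtain f where f: "f \<in> C1" "f \<in> C2" by blast
    have "weakly_prefers [2,0,1] (f (pr [2,0,1])) (f (pr [1,2,0]))" using tr[of f "[2,0,1]" "[1,2,0]"] f unfolding C1_def by simp
    thus False using f unfolding C2_def C1_def weakly_prefers_def prefers3 by simp
  qed
  have d02: "C0 \<inter> C2 = {}"
  proof (rule ccontr)
    assume "C0 \<inter> C2 \<noteq> {}" then obtain f where f: "f \<in> C0" "f \<in> C2" by blast
    have "weakly_prefers [0,1,2] (f (pr [0,1,2])) (f (pr [2,0,1]))" using tr[of f "[0,1,2]" "[2,0,1]"] f unfolding C0_def by simp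
    thus False using f unfolding C2_def C0_def weakly_prefers_def prefers3 by simp
  qed
  have "measure_pmf.prob D (C0 \<union> C1 \<union> C2) = measure_pmf.prob D (C0 \<union> C1) + measure_pmf.prob D C2"
    by (rule measure_pmf.finite_measure_Union) (use d12 d02 in auto)
  also have "measure_pmf.prob D (C0 \<union> C1) = measure_pmf.prob D C0 + measure_pmf.prob D C1"
    by (rule measure_pmf.finite_measure_Union) (use d01 in auto)
  finally have "measure_pmf.prob D (C0 \<union> C1 \<union> C2) = 3/2" using m0 m1 m2 by simp
  moreover have "measure_pmf.prob D (C0 \<union> C1 \<union> C2) \<le> 1" by (rule measure_pmf.prob_le_1)
  ultimately show False by simp
qed

theorem theorem3:
  shows "(\<forall>(N :: 'a set) (Out :: 'o set) Sig. ordinal_setting N Out Sig \<longrightarrow>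
            UnivT N Out Sig \<subseteq> StrongT N Out Sig \<and>
            StrongT N Out Sig \<subseteq> LexT N Out Sig \<and>
            LexT N Out Sig \<subseteq> WeakT N Out Sig)
    \<and> (\<exists>(N :: nat set) (Out :: nat set) Sig M. ordinal_setting N Out Sig \<and>
            (\<forall>j\<in>N. Sig j = strict_orders Out) \<and>
            M \<in> StrongT N Out Sig - UnivT N Out Sig)
    \<and> (\<exists>(N :: nat set) (Out :: nat set) Sig M. ordinal_setting N Out Sig \<and>
            (\<forall>j\<in>N. Sig j = strict_orders Out) \<and>
            M \<in> LexT N Out Sig - StrongT N Out Sig)
    \<and> (\<exists>(N :: nat set) (Out :: nat set) Sig M. ordinal_setting N Out Sig \<and>
            (\<forall>j\<in>N. Sig j = strict_orders Out) \<and>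
            M \<in> WeakT N Out Sig - LexT N Out Sig)"
  proof -
  have 1: "\<forall>(N :: 'a set) (Out :: 'o set) Sig. ordinal_setting N Out Sig \<longrightarrow>
            UnivT N Out Sig \<subseteq> StrongT N Out Sig \<and>
            StrongT N Out Sig \<subseteq> LexT N Out Sig \<and>
            LexT N Out Sig \<subseteq> WeakT N Out Sig"
    using univ_strong strong_lex lex_weak by blast
  have sg: "\<forall>j\<in>{0::nat}. Sig3 j = strict_orders Out3" unfolding Sig3_def by simp
  show ?thesis
  proof (intro conjI 1)
    show "\<exists>(N :: nat set) (Out :: nat set) Sig M. ordinal_setting N Out Sig \<and>
            (\<forall>j\<in>N. Sig j = strict_orders Out) \<and> M \<in> StrongT N Out Sig - UnivT N Out Sig"
      using os3 sg a_strong a_not_univ by blast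
    show "\<exists>(N :: nat set) (Out :: nat set) Sig M. ordinal_setting N Out Sig \<and>
            (\<forall>j\<in>N. Sig j = strict_orders Out) \<and> M \<in> LexT N Out Sig - StrongT N Out Sig"
      using os3 sg b_lex b_not_strong by blast
    show "\<exists>(N :: nat set) (Out :: nat set) Sig M. ordinal_setting N Out Sig \<and>
            (\<forall>j\<in>N. Sig j = strict_orders Out) \<and> M \<in> WeakT N Out Sig - LexT N Out Sig"
      using os3 sg c_weak c_not_lex by blast
  qed
qed

end
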